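(* Let $\underline{T}=(T_1,\ldots,T_n)$ be a spherical unitary on a Hilbert space $\mathcal{H}$, i.e. $T_iT_j=T_jT_i$ for all $i,j$, each $T_i$ is normal, and $\sum_{i=1}^nT_iT_i^*=I$. Let $\tilde{\underline{V}}$ on $\tilde{\mathcal{H}}\supseteq\mathcal{H}$ be the minimal isometric dilation of $\underline{T}$. Then the maximal commuting piece of $\tilde{\underline{V}}$ is $\underline{T}$, i.e. $\tilde{\mathcal{H}}^c(\tilde{\underline{V}})=\mathcal{H}$ and $\tilde V_i^c=T_i$ for all $i$.
   Context: Notation: $\Lambda=\{1,\ldots,n\}$, $\tilde\Lambda=\bigcup_{m\ge0}\Lambda^m$; $\underline{R}^\alpha=R_{\alpha_1}\cdots R_{\alpha_m}$, $\underline{R}^0=I$. The minimal isometric dilation of a contractive tuple $\underline{T}$ on $\mathcal{H}$ is a tuple $\tilde{\underline{V}}$ of isometries with mutually orthogonal ranges on $\tilde{\mathcal{H}}\supseteq\mathcal{H}$ with $\tilde V_i^*h=T_i^*h$ for $h\in\mathcal{H}$ and $\overline{\mathrm{span}}\{\tilde{\underline{V}}^\alpha h:h\in\mathcal{H},\alpha\in\tilde\Lambda\}=\tilde{\mathcal{H}}$ (unique up to unitary equivalence fixing $\mathcal{H}$). Maximal commuting piece of a tuple $\underline{R}$ on $\mathcal{L}$: the largest closed subspace $\mathcal{L}^c(\underline{R})$ invariant under all $R_i^*$ on which $R_i^*R_j^*h=R_j^*R_i^*h$ for all $i,j$; $R_i^c=P_{\mathcal{L}^c(\underline{R})}R_i|_{\mathcal{L}^c(\underline{R})}$.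 *)

theory Defs
  imports "HOL-Analysis.Analysis"
begin

text \<open>A complex Hilbert space is modelled as a real Hilbert space (type class
  real_inner + complete_space) together with a complex structure J (multiplication
  by the imaginary unit): J is real-linear, J o J = -id and J preserves the real
  inner product. The complex inner product is then inner x y + i inner x (J y)
  (up to convention), and the real inner product is its real part.\<close>

definition cstruct :: "('a::real_inner \<Rightarrow> 'a) \<Rightarrow> bool" where
  "cstruct J \<longleftrightarrow> linear J \<and> (\<forall>x. J (J x) = - x) \<and> (\<forall>x y. inner (J x) (J y) = inner x y)"

definition cbounded :: "('a::real_normed_vector \<Rightarrow> 'a) \<Rightarrow> ('b::real_normed_vector \<Rightarrow> 'b)
    \<Rightarrow> ('a \<Rightarrow> 'b) \<Rightarrow> bool" where
  "cbounded J1 J2 T \<longleftrightarrow> bounded_linear T \<and> (\<forall>x. T (J1 x) = J2 (T x))"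

text \<open>Hilbert space adjoint (for complex-linear operators the real adjoint coincides
  with the complex adjoint).\<close>
definition adj :: "('a::real_inner \<Rightarrow> 'a) \<Rightarrow> ('a \<Rightarrow> 'a)" where
  "adj T = (THE S. \<forall>x y. inner (T x) y = inner x (S y))"

definition oproj :: "'a::real_inner set \<Rightarrow> 'a \<Rightarrow> 'a" where
  "oproj M x = (THE p. p \<in> M \<and> (\<forall>m\<in>M. inner (x - p) m = 0))"

fun opword :: "(nat \<Rightarrow> 'a \<Rightarrow> 'a) \<Rightarrow> nat list \<Rightarrow> 'a \<Rightarrow> 'a" where
  "opword R [] = id"
| "opword R (i # \<alpha>) = R i \<circ> opword R \<alpha>"

definition comm_inv :: "('a::real_inner \<Rightarrow> 'a) \<Rightarrow> (nat \<Rightarrow> 'a \<Rightarrow> 'a) \<Rightarrow> nat \<Rightarrow> 'a set \<Rightarrow> bool" where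
  "comm_inv J R n L \<longleftrightarrow> subspace L \<and> closed L \<and> J ` L \<subseteq> L
     \<and> (\<forall>i\<in>{1..n}. adj (R i) ` L \<subseteq> L)
     \<and> (\<forall>i\<in>{1..n}. \<forall>j\<in>{1..n}. \<forall>h\<in>L. adj (R i) (adj (R j) h) = adj (R j) (adj (R i) h))"

definition max_comm_space :: "('a::real_inner \<Rightarrow> 'a) \<Rightarrow> (nat \<Rightarrow> 'a \<Rightarrow> 'a) \<Rightarrow> nat \<Rightarrow> 'a set" where
  "max_comm_space J R n = (GREATEST L. comm_inv J R n L)"

end

theory Submission
  imports Defs
begin

lemma parallelogram_law:
  fixes a b :: "'a::real_inner"
  shows "norm (a - b)^2 + norm (a + b)^2 = 2 * norm a ^2 + 2 * norm b ^2"
  by (simp add: power2_norm_eq_inner inner_diff inner_add inner_commute algebra_simps)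

lemma inner_ext:
  fixes a b :: "'a::real_inner"
  assumes "\<And>x. inner x a = inner x b" shows "a = b"
proof -
  have "inner (a - b) (a - b) = 0" using assms[of "a - b"] by (simp add: inner_diff_right)
  then show ?thesis by simp
qed

lemma riesz:
  fixes f :: "'a::{real_inner,complete_space} \<Rightarrow> real"
  assumes bl: "bounded_linear f"
  shows "\<exists>z. \<forall>x. f x = inner z x"
proof (cases "\<forall>x. f x = 0")
  case True then show ?thesis by (intro exI[of _ 0]) auto
next
  case False
  then obtain x0 where x0: "f x0 \<noteq> 0" by auto
  interpret f: bounded_linear f by fact
  define A where "A = {x. f x = 1}"
  have x1A: "x0 /\<^sub>R f x0 \<in> A" using x0 by (simp add: A_def f.scale)
  define D where "D = Inf ((\<lambda>x. norm x ^ 2) ` A)"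
  have bdd: "bdd_below ((\<lambda>x. norm x ^ 2) ` A)" by (auto intro: bdd_belowI[of _ 0])
  have DA: "D \<le> norm x ^2" if "x \<in> A" for x
    unfolding D_def using bdd that by (auto intro: cInf_lower)
  have "\<exists>x\<in>A. norm x ^2 < D + 1/Suc k" for k
  proof -
    have "\<exists>y\<in>(\<lambda>x. norm x ^ 2) ` A. y < D + 1/Suc k"
      by (rule cInf_lessD) (use x1A D_def in auto)
    then show ?thesis by auto
  qed
  then obtain X where X: "\<And>k. X k \<in> A" "\<And>k. norm (X k)^2 < D + 1/Suc k" by metis
  have dist: "norm (X k - X l)^2 \<le> 2/Suc k + 2/Suc l" for k l
  proof -
    have "(X k + X l) /\<^sub>R 2 \<in> A" using X(1)[of k] X(1)[of l]
      by (simp add: A_def f.scale f.add)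
    then have "D \<le> norm ((X k + X l) /\<^sub>R 2)^2" by (rule DA)
    also have "\<dots> = norm (X k + X l)^2 / 4" by (simp add: power_divide)
    finally have "4 * D \<le> norm (X k + X l)^2" by simp
    moreover have "norm (X k - X l)^2 + norm (X k + X l)^2 = 2 * norm (X k)^2 + 2 * norm (X l)^2"
      by (rule parallelogram_law)
    ultimately show ?thesis using X(2)[of k] X(2)[of l] by linarith
  qed
  have "Cauchy X"
  proof (rule CauchyI)
    fix e :: real assume e: "0 < e"
    obtain N :: nat where N: "4 / e^2 < real N" using reals_Archimedean2 by blast
    have "4 / Suc N < e^2"
    proof -
      have "4 < e^2 * real N" using N e by (simp add: field_simps)
      also have "\<dots> < e^2 * Suc N" using e by simp
      finally show ?thesis by (simp add: field_simps)
    qed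
    show "\<exists>M. \<forall>m\<ge>M. \<forall>n\<ge>M. norm (X m - X n) < e"
    proof (intro exI allI impI)
      fix m n assume mn: "N \<le> m" "N \<le> n"
      have "2 / Suc m \<le> 2 / Suc N" "2 / Suc n \<le> 2 / Suc N" using mn
        by (auto intro!: divide_left_mono)
      then have "norm (X m - X n)^2 < e^2" using dist[of m n] \<open>4 / Suc N < e^2\<close> by linarith
      then show "norm (X m - X n) < e" using e by (simp add: power_less_imp_less_base)
    qed
  qed
  then obtain z where z: "X \<longlonglongrightarrow> z" using Cauchy_convergent_iff convergent_def by blast
  have "(\<lambda>k. f (X k)) \<longlonglongrightarrow> f z" using z by (rule f.tendsto)
  moreover have "(\<lambda>k. f (X k)) = (\<lambda>k. 1)" using X(1) by (auto simp: A_def)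
  ultimately have "(\<lambda>k. 1::real) \<longlonglongrightarrow> f z" by simp
  then have fz: "f z = 1" using LIMSEQ_unique[OF tendsto_const] by metis
  have "norm z ^ 2 \<le> D"
  proof (rule LIMSEQ_le)
    show "(\<lambda>k. norm (X k)^2) \<longlonglongrightarrow> norm z ^ 2" using z by (intro tendsto_intros)
    show "(\<lambda>k. D + 1 / real (Suc k)) \<longlonglongrightarrow> D"
      using tendsto_add[OF tendsto_const LIMSEQ_inverse_real_of_nat] by (simp add: inverse_eq_divide)
    show "\<exists>N. \<forall>k\<ge>N. norm (X k)^2 \<le> D + 1 / real (Suc k)" using X(2) less_imp_le by blast
  qed
  have orth: "inner z v = 0" if v: "f v = 0" for v
  proof (cases "v = 0")
    case True then show ?thesis by simp
  next
    case False
    define c where "c = inner z v"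
    define q where "q = norm v ^ 2"
    have q: "q > 0" using False by (simp add: q_def)
    define t where "t = - c / q"
    have "z + t *\<^sub>R v \<in> A" using fz v by (simp add: A_def f.add f.scale)
    then have "D \<le> norm (z + t *\<^sub>R v)^2" by (rule DA)
    also have "\<dots> = inner (z + t *\<^sub>R v) (z + t *\<^sub>R v)" by (simp add: power2_norm_eq_inner)
    also have "\<dots> = inner z z + 2 * t * inner z v + t^2 * inner v v"
      by (simp add: inner_add_left inner_add_right inner_commute[of v z] power2_eq_square algebra_simps)
    also have "\<dots> = norm z ^ 2 + 2 * t * c + t^2 * q" by (simp add: c_def q_def power2_norm_eq_inner)
    also have "\<dots> = norm z ^ 2 - c^2 / q" using q by (simp add: t_def field_simps power2_eq_square)
    finally have "c^2 / q \<le> 0" using \<open>norm z ^ 2 \<le> D\<close> by linarith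
    then have "c^2 \<le> 0" using q by (simp add: divide_le_0_iff)
    then show ?thesis by (simp add: c_def)
  qed
  have zz: "inner z z \<noteq> 0" using fz by auto
  show ?thesis
  proof (intro exI allI)
    fix x
    have "f (x - f x *\<^sub>R z) = 0" using fz by (simp add: f.diff f.scale)
    then have "inner z (x - f x *\<^sub>R z) = 0" by (rule orth)
    then have e: "inner z x = f x * inner z z" by (simp add: inner_diff_right)
    have "inner (z /\<^sub>R inner z z) x = inner z x / inner z z" by (simp add: divide_inverse mult.commute)
    also have "\<dots> = f x" unfolding e using zz by simp
    finally show "f x = inner (z /\<^sub>R inner z z) x" by (rule sym)
  qed
qed

lemma adjoint_exists:
  fixes T :: "'a::{real_inner,complete_space} \<Rightarrow> 'b::real_inner"
  assumes "bounded_linear T"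
  shows "\<exists>S. \<forall>x y. inner (T x) y = inner x (S y)"
proof -
  have "\<forall>y. \<exists>z. \<forall>x. inner (T x) y = inner x z"
  proof
    fix y
    have "bounded_linear (\<lambda>x. inner (T x) y)"
      using bounded_linear_compose[OF bounded_linear_inner_left assms] .
    from riesz[OF this] obtain z where "\<forall>x. inner (T x) y = inner z x" by blast
    then show "\<exists>z. \<forall>x. inner (T x) y = inner x z" by (auto simp: inner_commute)
  qed
  then have "\<exists>S. \<forall>y. \<forall>x. inner (T x) y = inner x (S y)" by (rule choice)
  then show ?thesis by blast
qed

lemma adj_char:
  fixes T :: "'a::{real_inner,complete_space} \<Rightarrow> 'a"
  assumes "bounded_linear T"
  shows "inner (T x) y = inner x (adj T y)"
proof -
  have "\<exists>!S. \<forall>x y. inner (T x) y = inner x (S y)"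
  proof -
    obtain S where S: "\<forall>x y. inner (T x) y = inner x (S y)" using adjoint_exists[OF assms] by blast
    moreover have "S' = S" if S': "\<forall>x y. inner (T x) y = inner x (S' y)" for S'
    proof (rule ext, rule inner_ext)
      fix y x
      have "inner x (S' y) = inner (T x) y" using S' by simp
      also have "\<dots> = inner x (S y)" using S by simp
      finally show "inner x (S' y) = inner x (S y)" .
    qed
    ultimately show ?thesis by blast
  qed
  then have "\<forall>x y. inner (T x) y = inner x (adj T y)" unfolding adj_def by (rule theI')
  then show ?thesis by blast
qed

lemma adjoint_linear:
  assumes "\<And>x y. inner (T x) y = inner x (S y)"
  shows "linear S"
proof (rule linearI)
  fix a b
  show "S (a + b) = S a + S b"
    by (rule inner_ext) (simp add: assms[symmetric] inner_add_right)
next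
  fix c :: real and a
  show "S (c *\<^sub>R a) = c *\<^sub>R S a"
    by (rule inner_ext) (simp add: assms[symmetric])
qed

primrec Bf :: "('a \<Rightarrow> 'h::real_inner) \<Rightarrow> (nat \<Rightarrow> 'a \<Rightarrow> 'a) \<Rightarrow> nat \<Rightarrow> nat \<Rightarrow> 'a \<Rightarrow> 'a \<Rightarrow> real" where
  "Bf Wa Vs n 0 x y = inner (Wa x) (Wa y)"
| "Bf Wa Vs n (Suc m) x y = (\<Sum>i=1..n. Bf Wa Vs n m (Vs i x) (Vs i y))"

locale dil =
  fixes n :: nat
    and T :: "nat \<Rightarrow> 'h::{real_inner,complete_space} \<Rightarrow> 'h"
    and V :: "nat \<Rightarrow> 'a::{real_inner,complete_space} \<Rightarrow> 'a"
    and W :: "'h \<Rightarrow> 'a"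
  assumes T_bl: "\<And>i. i \<in> {1..n} \<Longrightarrow> bounded_linear (T i)"
    and T_comm: "\<And>i j x. i \<in> {1..n} \<Longrightarrow> j \<in> {1..n} \<Longrightarrow> T i (T j x) = T j (T i x)"
    and T_normal: "\<And>i x. i \<in> {1..n} \<Longrightarrow> T i (adj (T i) x) = adj (T i) (T i x)"
    and T_sph: "\<And>x. (\<Sum>i=1..n. T i (adj (T i) x)) = x"
    and W_bl: "bounded_linear W"
    and W_isom: "\<And>x. norm (W x) = norm x"
    and V_bl: "\<And>i. i \<in> {1..n} \<Longrightarrow> bounded_linear (V i)"
    and V_isom: "\<And>i x. i \<in> {1..n} \<Longrightarrow> norm (V i x) = norm x"
    and V_orth: "\<And>i j x y. i \<in> {1..n} \<Longrightarrow> j \<in> {1..n} \<Longrightarrow> i \<noteq> j \<Longrightarrow> inner (V i x) (V j y) = 0"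
    and V_dil: "\<And>i h. i \<in> {1..n} \<Longrightarrow> adj (V i) (W h) = W (adj (T i) h)"
    and V_min: "closure (span {opword V \<alpha> (W h) | \<alpha> h. set \<alpha> \<subseteq> {1..n}}) = UNIV"
begin

abbreviation "Ts i \<equiv> adj (T i)"
abbreviation "Vs i \<equiv> adj (V i)"
definition "Wa = (SOME S. \<forall>x y. inner (W x) y = inner x (S y))"

lemma T_adj: "i \<in> {1..n} \<Longrightarrow> inner (T i x) y = inner x (Ts i y)"
  using adj_char[OF T_bl] by blast
lemma V_adj: "i \<in> {1..n} \<Longrightarrow> inner (V i x) y = inner x (Vs i y)"
  using adj_char[OF V_bl] by blast
lemma Wa_adj: "inner (W x) y = inner x (Wa y)"
proof -
  have "\<forall>x y. inner (W x) y = inner x (Wa y)"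
    unfolding Wa_def by (rule someI_ex[of "\<lambda>S. \<forall>x y. inner (W x) y = inner x (S y)"]) (rule adjoint_exists[OF W_bl])
  then show ?thesis by blast
qed

lemma Ts_lin: "i \<in> {1..n} \<Longrightarrow> linear (Ts i)"
  by (rule adjoint_linear[where T="T i"]) (rule T_adj)
lemma Vs_lin: "i \<in> {1..n} \<Longrightarrow> linear (Vs i)"
  by (rule adjoint_linear[where T="V i"]) (rule V_adj)
lemma Wa_lin: "linear Wa"
  by (rule adjoint_linear[where T="W"]) (rule Wa_adj)
lemma T_lin: "i \<in> {1..n} \<Longrightarrow> linear (T i)"
  using T_bl bounded_linear.linear by blast
lemma V_lin: "i \<in> {1..n} \<Longrightarrow> linear (V i)"
  using V_bl bounded_linear.linear by blast
lemma W_lin: "linear W"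
  using W_bl bounded_linear.linear by blast

lemma isom_inner:
  assumes "linear f" "\<And>x. norm (f x) = norm x"
  shows "inner (f x) (f y) = inner x y"
proof -
  have "norm (f (x + y))^2 = norm (x + y)^2" using assms(2) by simp
  then have "norm (f x + f y)^2 = norm (x + y)^2" using linear_add[OF assms(1)] by simp
  moreover have "inner (f u) (f u) = inner u u" for u by (metis assms(2) power2_norm_eq_inner)
  ultimately show ?thesis
    by (simp add: power2_norm_eq_inner inner_add inner_commute)
qed

lemma W_inner: "inner (W x) (W y) = inner x y"
  using isom_inner[OF W_lin W_isom] .
lemma Wa_W: "Wa (W x) = x"
  by (rule inner_ext) (metis Wa_adj W_inner inner_commute)

lemma Vs_V: "i \<in> {1..n} \<Longrightarrow> j \<in> {1..n} \<Longrightarrow> Vs i (V j x) = (if i = j then x else 0)"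
proof (rule inner_ext)
  fix w assume i: "i \<in> {1..n}" and j: "j \<in> {1..n}"
  have "inner w (Vs i (V j x)) = inner (V i w) (V j x)" using V_adj[OF i] by simp
  also have "\<dots> = (if i = j then inner w x else 0)"
    using isom_inner[OF V_lin[OF i] V_isom[OF i]] V_orth[OF i j] by auto
  finally show "inner w (Vs i (V j x)) = inner w (if i = j then x else 0)" by simp
qed

lemma V_sum_inner:
  "inner (\<Sum>i=1..n. V i (a i)) (\<Sum>j=1..n. V j (b j)) = (\<Sum>i=1..n. inner (a i) (b i))"
proof -
  have "inner (\<Sum>i=1..n. V i (a i)) (\<Sum>j=1..n. V j (b j))
      = (\<Sum>i=1..n. \<Sum>j=1..n. inner (V i (a i)) (V j (b j)))"
    by (simp only: inner_sum_left inner_sum_right) (rule sum.swap)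
  also have "\<dots> = (\<Sum>i=1..n. \<Sum>j=1..n. if i = j then inner (a i) (b i) else 0)"
  proof (intro sum.cong refl)
    fix i j assume i: "i \<in> {1..n}" and j: "j \<in> {1..n}"
    show "inner (V i (a i)) (V j (b j)) = (if i = j then inner (a i) (b i) else 0)"
      using V_adj[OF i] Vs_V[OF i j] by simp
  qed
  also have "\<dots> = (\<Sum>i=1..n. inner (a i) (b i))" by simp
  finally show ?thesis .
qed

lemma Vs_sum_le: "(\<Sum>i=1..n. inner (Vs i y) (Vs i y)) \<le> inner y y"
proof -
  define z where "z = (\<Sum>i=1..n. V i (Vs i y))"
  define s where "s = (\<Sum>i=1..n. inner (Vs i y) (Vs i y))"
  have yz: "inner y z = s" unfolding z_def s_def inner_sum_right
    by (intro sum.cong refl) (metis V_adj inner_commute)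
  have zz: "inner z z = s" unfolding z_def s_def by (rule V_sum_inner)
  have "0 \<le> inner (y - z) (y - z)" by simp
  also have "\<dots> = inner y y - 2 * inner y z + inner z z" by (simp add: inner_diff inner_commute)
  finally show ?thesis using yz zz s_def by simp
qed

lemma Wa_le: "inner (Wa y) (Wa y) \<le> inner y y"
proof -
  have yz: "inner y (W (Wa y)) = inner (Wa y) (Wa y)" by (metis Wa_adj inner_commute)
  have zz: "inner (W (Wa y)) (W (Wa y)) = inner (Wa y) (Wa y)" by (rule W_inner)
  have "0 \<le> inner (y - W (Wa y)) (y - W (Wa y))" by simp
  also have "\<dots> = inner y y - 2 * inner y (W (Wa y)) + inner (W (Wa y)) (W (Wa y))"
    by (simp add: inner_diff inner_commute)
  finally show ?thesis using yz zz by simp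
qed

lemma Wa_ge_imp: assumes "inner y y \<le> inner (Wa y) (Wa y)" shows "y = W (Wa y)"
proof -
  have yz: "inner y (W (Wa y)) = inner (Wa y) (Wa y)" by (metis Wa_adj inner_commute)
  have zz: "inner (W (Wa y)) (W (Wa y)) = inner (Wa y) (Wa y)" by (rule W_inner)
  have "inner (y - W (Wa y)) (y - W (Wa y)) = inner y y - 2 * inner y (W (Wa y)) + inner (W (Wa y)) (W (Wa y))"
    by (simp add: inner_diff inner_commute)
  also have "\<dots> \<le> 0" using yz zz assms by simp
  finally have "inner (y - W (Wa y)) (y - W (Wa y)) = 0"
    using inner_ge_zero[of "y - W (Wa y)"] by linarith
  then show ?thesis by simp
qed

end

context dil
begin

lemma Ts_comm:
  assumes i: "i \<in> {1..n}" and j: "j \<in> {1..n}"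
  shows "Ts i (Ts j x) = Ts j (Ts i x)"
proof (rule inner_ext)
  fix w
  have "inner w (Ts i (Ts j x)) = inner (T j (T i w)) x"
    by (simp add: T_adj[OF i, symmetric] T_adj[OF j, symmetric])
  also have "\<dots> = inner (T i (T j w)) x" using T_comm[OF i j] by simp
  also have "\<dots> = inner w (Ts j (Ts i x))"
    by (simp add: T_adj[OF i, symmetric] T_adj[OF j, symmetric])
  finally show "inner w (Ts i (Ts j x)) = inner w (Ts j (Ts i x))" .
qed

lemma T_sph2: "(\<Sum>i=1..n. Ts i (T i x)) = x"
proof -
  have "(\<Sum>i=1..n. Ts i (T i x)) = (\<Sum>i=1..n. T i (Ts i x))"
    by (intro sum.cong refl) (simp add: T_normal)
  then show ?thesis using T_sph by simp
qed

lemma Tsq: "(\<Sum>i=1..n. inner (Ts i u) (Ts i u)) = inner u u"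
proof -
  have "(\<Sum>i=1..n. inner (Ts i u) (Ts i u)) = (\<Sum>i=1..n. inner (T i (Ts i u)) u)"
    by (intro sum.cong refl) (simp add: T_adj)
  also have "\<dots> = inner (\<Sum>i=1..n. T i (Ts i u)) u" by (simp add: inner_sum_left)
  finally show ?thesis using T_sph by simp
qed

lemma Tq: "(\<Sum>i=1..n. inner (T i u) (T i u)) = inner u u"
proof -
  have "(\<Sum>i=1..n. inner (T i u) (T i u)) = (\<Sum>i=1..n. inner u (Ts i (T i u)))"
    by (intro sum.cong refl) (simp add: T_adj)
  also have "\<dots> = inner u (\<Sum>i=1..n. Ts i (T i u))" by (simp add: inner_sum_right)
  finally show ?thesis using T_sph2 by simp
qed

lemma T_cross:
  assumes i: "i \<in> {1..n}" and j: "j \<in> {1..n}"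
  shows "Ts i (T j h) = T j (Ts i h)"
proof -
  define a where "a i j = Ts i (T j h)" for i j
  define b where "b i j = T j (Ts i h)" for i j
  have SA: "(\<Sum>i=1..n. \<Sum>j=1..n. inner (a i j) (a i j)) = inner h h"
  proof -
    have "(\<Sum>i=1..n. \<Sum>j=1..n. inner (a i j) (a i j)) = (\<Sum>j=1..n. \<Sum>i=1..n. inner (Ts i (T j h)) (Ts i (T j h)))"
      unfolding a_def by (rule sum.swap)
    also have "\<dots> = (\<Sum>j=1..n. inner (T j h) (T j h))" by (intro sum.cong refl) (rule Tsq)
    also have "\<dots> = inner h h" by (rule Tq)
    finally show ?thesis .
  qed
  have SB: "(\<Sum>i=1..n. \<Sum>j=1..n. inner (b i j) (b i j)) = inner h h"
  proof -
    have "(\<Sum>i=1..n. \<Sum>j=1..n. inner (b i j) (b i j)) = (\<Sum>i=1..n. inner (Ts i h) (Ts i h))"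
      unfolding b_def by (intro sum.cong refl) (rule Tq)
    also have "\<dots> = inner h h" by (rule Tsq)
    finally show ?thesis .
  qed
  have SAB: "(\<Sum>i=1..n. \<Sum>j=1..n. inner (a i j) (b i j)) = inner h h"
  proof -
    have "(\<Sum>i=1..n. \<Sum>j=1..n. inner (a i j) (b i j))
        = (\<Sum>i=1..n. \<Sum>j=1..n. inner (T i (Ts i h)) (Ts j (T j h)))"
    proof (intro sum.cong refl)
      fix i j assume i: "i \<in> {1..n}" and j: "j \<in> {1..n}"
      have "inner (a i j) (b i j) = inner (T j (Ts i h)) (Ts i (T j h))"
        unfolding a_def b_def by (rule inner_commute)
      also have "\<dots> = inner (Ts i h) (Ts j (Ts i (T j h)))" by (rule T_adj[OF j])
      also have "\<dots> = inner (Ts i h) (Ts i (Ts j (T j h)))" using Ts_comm[OF i j] by simp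
      also have "\<dots> = inner (T i (Ts i h)) (Ts j (T j h))" by (rule T_adj[OF i, symmetric])
      finally show "inner (a i j) (b i j) = inner (T i (Ts i h)) (Ts j (T j h))" .
    qed
    also have "\<dots> = inner (\<Sum>i=1..n. T i (Ts i h)) (\<Sum>j=1..n. Ts j (T j h))"
      by (simp only: inner_sum_left inner_sum_right) (rule sum.swap)
    also have "\<dots> = inner h h" using T_sph T_sph2 by simp
    finally show ?thesis .
  qed
  have "(\<Sum>i=1..n. \<Sum>j=1..n. inner (a i j - b i j) (a i j - b i j))
      = (\<Sum>i=1..n. \<Sum>j=1..n. inner (a i j) (a i j)) - 2 * (\<Sum>i=1..n. \<Sum>j=1..n. inner (a i j) (b i j))
        + (\<Sum>i=1..n. \<Sum>j=1..n. inner (b i j) (b i j))"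
    by (simp add: inner_diff inner_commute[of "b _ _" "a _ _"] sum.distrib sum_subtractf sum_distrib_left algebra_simps)
  also have "\<dots> = 0" using SA SB SAB by simp
  finally have Z: "(\<Sum>i=1..n. \<Sum>j=1..n. inner (a i j - b i j) (a i j - b i j)) = 0" .
  have "(\<Sum>j=1..n. inner (a i j - b i j) (a i j - b i j)) = 0"
    using Z i by (subst (asm) sum_nonneg_eq_0_iff) (auto intro: sum_nonneg)
  then have "inner (a i j - b i j) (a i j - b i j) = 0"
    using j by (subst (asm) sum_nonneg_eq_0_iff) auto
  then show ?thesis by (simp add: a_def b_def)
qed

lemma W_decomp: "(\<Sum>i=1..n. V i (W (Ts i h))) = W h"
proof -
  define z where "z = (\<Sum>i=1..n. V i (W (Ts i h)))"
  have wz: "inner (W h) z = inner h h"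
  proof -
    have "inner (W h) z = (\<Sum>i=1..n. inner (W (Ts i h)) (Vs i (W h)))"
      unfolding z_def inner_sum_right
      by (intro sum.cong refl) (metis V_adj inner_commute)
    also have "\<dots> = (\<Sum>i=1..n. inner (Ts i h) (Ts i h))"
      by (intro sum.cong refl) (simp add: V_dil W_inner)
    also have "\<dots> = inner h h" by (rule Tsq)
    finally show ?thesis .
  qed
  have zz: "inner z z = inner h h"
  proof -
    have "inner z z = (\<Sum>i=1..n. inner (W (Ts i h)) (W (Ts i h)))"
      unfolding z_def by (rule V_sum_inner)
    also have "\<dots> = inner h h" unfolding W_inner by (rule Tsq)
    finally show ?thesis .
  qed
  have "inner (W h - z) (W h - z) = inner (W h) (W h) - 2 * inner (W h) z + inner z z"
    by (simp add: inner_diff inner_commute)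
  also have "\<dots> = 0" using wz zz W_inner by simp
  finally have "W h - z = 0" by simp
  then show ?thesis unfolding z_def by simp
qed

lemma Wa_decomp: "Wa x = (\<Sum>i=1..n. T i (Wa (Vs i x)))"
proof (rule inner_ext)
  fix h
  have "inner h (\<Sum>i=1..n. T i (Wa (Vs i x))) = (\<Sum>i=1..n. inner (V i (W (Ts i h))) x)"
    unfolding inner_sum_right
  proof (intro sum.cong refl)
    fix i assume i: "i \<in> {1..n}"
    have "inner h (T i (Wa (Vs i x))) = inner (Ts i h) (Wa (Vs i x))"
      by (metis T_adj[OF i] inner_commute)
    also have "\<dots> = inner (W (Ts i h)) (Vs i x)" by (simp add: Wa_adj)
    also have "\<dots> = inner (V i (W (Ts i h))) x" by (simp add: V_adj[OF i])
    finally show "inner h (T i (Wa (Vs i x))) = inner (V i (W (Ts i h))) x" .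
  qed
  also have "\<dots> = inner (W h) x" by (subst W_decomp[symmetric]) (simp only: inner_sum_left)
  also have "\<dots> = inner h (Wa x)" by (rule Wa_adj)
  finally show "inner h (Wa x) = inner h (\<Sum>i=1..n. T i (Wa (Vs i x)))" by simp
qed

lemma row_defect:
  fixes k :: "nat \<Rightarrow> 'h"
  defines "e \<equiv> (\<Sum>j=1..n. T j (k j))"
  shows "(\<Sum>j=1..n. inner (k j - Ts j e) (k j - Ts j e)) = (\<Sum>j=1..n. inner (k j) (k j)) - inner e e"
proof -
  have s1: "(\<Sum>j=1..n. inner (k j) (Ts j e)) = inner e e"
  proof -
    have "(\<Sum>j=1..n. inner (k j) (Ts j e)) = (\<Sum>j=1..n. inner (T j (k j)) e)"
      by (intro sum.cong refl) (simp add: T_adj)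
    also have "\<dots> = inner e e" by (simp add: e_def inner_sum_left)
    finally show ?thesis .
  qed
  have "(\<Sum>j=1..n. inner (k j - Ts j e) (k j - Ts j e))
      = (\<Sum>j=1..n. inner (k j) (k j)) - 2 * (\<Sum>j=1..n. inner (k j) (Ts j e)) + (\<Sum>j=1..n. inner (Ts j e) (Ts j e))"
    by (simp add: inner_diff inner_commute[of "Ts _ e" "k _"] sum.distrib sum_subtractf sum_distrib_left algebra_simps)
  also have "\<dots> = (\<Sum>j=1..n. inner (k j) (k j)) - inner e e" using s1 Tsq by simp
  finally show ?thesis .
qed

lemma row_contr:
  fixes k :: "nat \<Rightarrow> 'h"
  shows "inner (\<Sum>j=1..n. T j (k j)) (\<Sum>j=1..n. T j (k j)) \<le> (\<Sum>j=1..n. inner (k j) (k j))"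
  using row_defect[of k] sum_nonneg[of "{1..n}" "\<lambda>j. inner (k j - Ts j (\<Sum>j=1..n. T j (k j))) (k j - Ts j (\<Sum>j=1..n. T j (k j)))"]
  by simp

end

context dil
begin

abbreviation "B m \<equiv> Bf Wa (\<lambda>i. adj (V i)) n m"

lemma B_lin: "B m (a *\<^sub>R x + b *\<^sub>R y) z = a * B m x z + b * B m y z"
proof (induction m arbitrary: x y z)
  case 0
  show ?case
    by (simp add: linear_add[OF Wa_lin] linear_scale[OF Wa_lin] inner_add_left)
next
  case (Suc m)
  have "B (Suc m) (a *\<^sub>R x + b *\<^sub>R y) z
      = (\<Sum>i=1..n. a * B m (Vs i x) (Vs i z) + b * B m (Vs i y) (Vs i z))"
    unfolding Bf.simps
  proof (intro sum.cong refl)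
    fix i assume i: "i \<in> {1..n}"
    have "Vs i (a *\<^sub>R x + b *\<^sub>R y) = a *\<^sub>R Vs i x + b *\<^sub>R Vs i y"
      by (simp add: linear_add[OF Vs_lin[OF i]] linear_scale[OF Vs_lin[OF i]])
    then show "B m (Vs i (a *\<^sub>R x + b *\<^sub>R y)) (Vs i z) = a * B m (Vs i x) (Vs i z) + b * B m (Vs i y) (Vs i z)"
      using Suc.IH by simp
  qed
  also have "\<dots> = a * B (Suc m) x z + b * B (Suc m) y z"
    by (simp add: sum.distrib sum_distrib_left)
  finally show ?case .
qed

lemma B_sym: "B m x y = B m y x"
  by (induction m arbitrary: x y) (simp_all add: inner_commute)

lemma B_add: "B m (x + y) z = B m x z + B m y z"
  using B_lin[of m 1 x 1 y z] by simp
lemma B_diff: "B m (x - y) z = B m x z - B m y z"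
  using B_lin[of m 1 x "-1" y z] by simp
lemma B_scale: "B m (c *\<^sub>R x) z = c * B m x z"
  using B_lin[of m c x 0 x z] by simp
lemma B_zero: "B m 0 z = 0"
  using B_scale[of m 0 0 z] by simp

lemma B_bound: "0 \<le> B m x x \<and> B m x x \<le> inner x x"
proof (induction m arbitrary: x)
  case 0
  show ?case using Wa_le[of x] by simp
next
  case (Suc m)
  have "B (Suc m) x x \<le> (\<Sum>i=1..n. inner (Vs i x) (Vs i x))"
    unfolding Bf.simps by (rule sum_mono) (use Suc.IH in blast)
  also have "\<dots> \<le> inner x x" by (rule Vs_sum_le)
  finally show ?case using Suc.IH by (auto intro: sum_nonneg)
qed

lemma B_W: "B m (W h) z = inner (W h) z"
proof (induction m arbitrary: h z)
  case 0
  show ?case by (simp add: Wa_W Wa_adj)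
next
  case (Suc m)
  have "B (Suc m) (W h) z = (\<Sum>i=1..n. inner (V i (W (Ts i h))) z)"
    unfolding Bf.simps
  proof (intro sum.cong refl)
    fix i assume i: "i \<in> {1..n}"
    show "B m (Vs i (W h)) (Vs i z) = inner (V i (W (Ts i h))) z"
      using Suc.IH V_dil[OF i] V_adj[OF i] by simp
  qed
  also have "\<dots> = inner (W h) z" by (subst W_decomp[symmetric]) (simp only: inner_sum_left)
  finally show ?case .
qed

lemma B_word:
  "set \<alpha> \<subseteq> {1..n} \<Longrightarrow> length \<alpha> \<le> m \<Longrightarrow> B m (opword V \<alpha> (W h)) z = inner (opword V \<alpha> (W h)) z"
proof (induction \<alpha> arbitrary: m z)
  case Nil
  then show ?case by (simp add: B_W)
next
  case (Cons j \<alpha>)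
  then obtain m' where m: "m = Suc m'" and le: "length \<alpha> \<le> m'" by (cases m) auto
  have j: "j \<in> {1..n}" and sub: "set \<alpha> \<subseteq> {1..n}" using Cons.prems by auto
  define u where "u = opword V \<alpha> (W h)"
  have "B m (opword V (j # \<alpha>) (W h)) z = (\<Sum>i=1..n. B m' (Vs i (V j u)) (Vs i z))"
    by (simp add: m u_def)
  also have "\<dots> = (\<Sum>i=1..n. if i = j then B m' u (Vs j z) else 0)"
  proof (intro sum.cong refl)
    fix i assume i: "i \<in> {1..n}"
    show "B m' (Vs i (V j u)) (Vs i z) = (if i = j then B m' u (Vs j z) else 0)"
      using Vs_V[OF i j] B_zero by simp
  qed
  also have "\<dots> = B m' u (Vs j z)" using j by simp
  also have "\<dots> = inner u (Vs j z)" unfolding u_def by (rule Cons.IH[OF sub le])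
  also have "\<dots> = inner (opword V (j # \<alpha>) (W h)) z" by (simp add: u_def V_adj[OF j])
  finally show ?case .
qed

definition "Sgen = {opword V \<alpha> (W h) | \<alpha> h. set \<alpha> \<subseteq> {1..n}}"

lemma B_span:
  assumes "u \<in> span Sgen"
  shows "\<exists>M. \<forall>m\<ge>M. \<forall>z. B m u z = inner u z"
proof -
  let ?P = "\<lambda>u. \<exists>M. \<forall>m\<ge>M. \<forall>z. B m u z = inner u z"
  have "subspace (Collect ?P)"
    unfolding subspace_def
  proof (intro conjI ballI allI)
    show "0 \<in> Collect ?P" by (simp add: B_zero)
  next
    fix x y assume "x \<in> Collect ?P" "y \<in> Collect ?P"
    then obtain M1 M2 where M1: "\<forall>m\<ge>M1. \<forall>z. B m x z = inner x z"
      and M2: "\<forall>m\<ge>M2. \<forall>z. B m y z = inner y z" by auto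
    have "\<forall>m\<ge>max M1 M2. \<forall>z. B m (x + y) z = inner (x + y) z"
      using M1 M2 by (simp add: B_add inner_add_left)
    then show "x + y \<in> Collect ?P" by blast
  next
    fix c :: real and x assume "x \<in> Collect ?P"
    then obtain M1 where M1: "\<forall>m\<ge>M1. \<forall>z. B m x z = inner x z" by auto
    have "\<forall>m\<ge>M1. \<forall>z. B m (c *\<^sub>R x) z = inner (c *\<^sub>R x) z"
      using M1 by (simp add: B_scale)
    then show "c *\<^sub>R x \<in> Collect ?P" by blast
  qed
  moreover have "?P x" if "x \<in> Sgen" for x
  proof -
    from that obtain \<alpha> h where x: "x = opword V \<alpha> (W h)" and s: "set \<alpha> \<subseteq> {1..n}"
      unfolding Sgen_def by blast
    show ?thesis using B_word[OF s] x by blast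
  qed
  ultimately show ?thesis using span_induct[OF assms] by blast
qed

end

context dil
begin

context
  fixes L :: "'a set"
  assumes LV: "\<And>i h. i \<in> {1..n} \<Longrightarrow> h \<in> L \<Longrightarrow> Vs i h \<in> L"
    and LC: "\<And>i j h. i \<in> {1..n} \<Longrightarrow> j \<in> {1..n} \<Longrightarrow> h \<in> L \<Longrightarrow> Vs i (Vs j h) = Vs j (Vs i h)"
begin

lemma key:
  assumes y: "y \<in> L"
  shows "B (Suc 0) y y - B 0 y y \<le> B (Suc (Suc 0)) y y - B (Suc 0) y y"
proof -
  define G where "G = Wa y"
  define g where "g j = Wa (Vs j y)" for j
  define hh where "hh i j = Wa (Vs i (Vs j y))" for i j
  define kk where "kk i j = hh i j - Ts i (g j)" for i j
  define e where "e i = g i - Ts i G" for i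
  have B0: "B 0 y y = inner G G" by (simp add: G_def)
  have B1: "B (Suc 0) y y = (\<Sum>j=1..n. inner (g j) (g j))" by (simp add: g_def)
  have B2: "B (Suc (Suc 0)) y y = (\<Sum>j=1..n. \<Sum>i=1..n. inner (hh i j) (hh i j))" by (simp add: hh_def)
  have Gd: "G = (\<Sum>j=1..n. T j (g j))" unfolding G_def g_def by (rule Wa_decomp)
  have gd: "g j = (\<Sum>i=1..n. T i (hh i j))" for j unfolding g_def hh_def by (rule Wa_decomp)
  have sym: "hh i j = hh j i" if "i \<in> {1..n}" "j \<in> {1..n}" for i j
    unfolding hh_def using LC[OF that y] by simp
  have s1: "(\<Sum>i=1..n. inner (kk i j) (kk i j)) = (\<Sum>i=1..n. inner (hh i j) (hh i j)) - inner (g j) (g j)" for j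
    using row_defect[of "\<lambda>i. hh i j"] unfolding kk_def gd[of j, symmetric] by simp
  have s2: "(\<Sum>i=1..n. inner (e i) (e i)) = (\<Sum>i=1..n. inner (g i) (g i)) - inner G G"
    using row_defect[of g] unfolding e_def Gd[symmetric] by simp
  have s3: "(\<Sum>j=1..n. T j (kk i j)) = e i" if i: "i \<in> {1..n}" for i
  proof -
    have "(\<Sum>j=1..n. T j (kk i j)) = (\<Sum>j=1..n. T j (hh j i) - Ts i (T j (g j)))"
    proof (intro sum.cong refl)
      fix j assume j: "j \<in> {1..n}"
      show "T j (kk i j) = T j (hh j i) - Ts i (T j (g j))"
        unfolding kk_def using linear_diff[OF T_lin[OF j]] sym[OF i j] T_cross[OF i j] by simp
    qed
    also have "\<dots> = g i - Ts i G"
      unfolding sum_subtractf gd[of i, symmetric] Gd linear_sum[OF Ts_lin[OF i]] by simp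
    finally show ?thesis by (simp add: e_def)
  qed
  have s4: "inner (e i) (e i) \<le> (\<Sum>j=1..n. inner (kk i j) (kk i j))" if i: "i \<in> {1..n}" for i
    using row_contr[of "kk i"] s3[OF i] by simp
  have "(\<Sum>i=1..n. inner (e i) (e i)) \<le> (\<Sum>i=1..n. \<Sum>j=1..n. inner (kk i j) (kk i j))"
    by (rule sum_mono) (rule s4)
  also have "\<dots> = (\<Sum>j=1..n. \<Sum>i=1..n. inner (kk i j) (kk i j))" by (rule sum.swap)
  also have "\<dots> = (\<Sum>j=1..n. (\<Sum>i=1..n. inner (hh i j) (hh i j)) - inner (g j) (g j))"
    by (intro sum.cong refl) (rule s1)
  finally show ?thesis using B0 B1 B2 s2 by (simp add: sum_subtractf)
qed

lemma mono: "y \<in> L \<Longrightarrow> B (Suc m) y y - B m y y \<le> B (Suc (Suc m)) y y - B (Suc m) y y"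
proof (induction m arbitrary: y)
  case 0
  then show ?case by (rule key)
next
  case (Suc m)
  have "B (Suc (Suc m)) y y - B (Suc m) y y = (\<Sum>i=1..n. B (Suc m) (Vs i y) (Vs i y) - B m (Vs i y) (Vs i y))"
    by (simp only: Bf.simps sum_subtractf)
  also have "\<dots> \<le> (\<Sum>i=1..n. B (Suc (Suc m)) (Vs i y) (Vs i y) - B (Suc m) (Vs i y) (Vs i y))"
    by (rule sum_mono) (rule Suc.IH, rule LV, simp, rule Suc.prems)
  also have "\<dots> = B (Suc (Suc (Suc m))) y y - B (Suc (Suc m)) y y"
    by (simp only: Bf.simps sum_subtractf)
  finally show ?case .
qed

lemma Dneg:
  assumes y: "y \<in> L"
  shows "B (Suc k) y y - B k y y \<le> 0"
proof (rule ccontr)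
  assume "\<not> ?thesis"
  then have c: "0 < B (Suc k) y y - B k y y" by simp
  define c where "c = B (Suc k) y y - B k y y"
  have D: "c \<le> B (Suc (k + j)) y y - B (k + j) y y" for j
  proof (induction j)
    case 0 then show ?case by (simp add: c_def)
  next
    case (Suc j)
    then show ?case using mono[OF y, of "k + j"] by simp
  qed
  have G: "B k y y + real j * c \<le> B (k + j) y y" for j
  proof (induction j)
    case 0 then show ?case by simp
  next
    case (Suc j)
    then show ?case using D[of j] by (simp add: algebra_simps)
  qed
  obtain j :: nat where j: "inner y y < real j * c" using c c_def ex_less_of_nat_mult by blast
  have "B k y y + real j * c \<le> inner y y"
    using G[of j] B_bound[of "k + j" y] by linarith
  then show False using j B_bound[of k y] by linarith
qed

lemma B_le0: "y \<in> L \<Longrightarrow> B m y y \<le> B 0 y y"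
proof (induction m)
  case 0 then show ?case by simp
next
  case (Suc m) then show ?case using Dneg[of y m] by linarith
qed

lemma L_sub:
  assumes y: "y \<in> L"
  shows "y \<in> range W"
proof -
  have "inner y y - inner (Wa y) (Wa y) \<le> 0 + e" if e: "0 < e" for e
  proof -
    have "y \<in> closure (span Sgen)" using V_min unfolding Sgen_def by simp
    then obtain u where u: "u \<in> span Sgen" and du: "dist u y < sqrt e"
      using closure_approachable e by (metis real_sqrt_gt_0_iff)
    obtain M where M: "\<forall>m\<ge>M. \<forall>z. B m u z = inner u z" using B_span[OF u] by blast
    have Bu: "B M u z = inner u z" for z using M by simp
    have "norm (y - u) < sqrt e" using du by (simp add: dist_norm norm_minus_commute)
    then have "norm (y - u)^2 < (sqrt e)^2" by (intro power_strict_mono) auto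
    then have "norm (y - u)^2 < e" using e by simp
    then have n: "inner (y - u) (y - u) < e" by (simp add: power2_norm_eq_inner)
    have "B M (y - u) (y - u) = B M y y - inner u y - inner u (y - u)"
    proof -
      have "B M (y - u) (y - u) = B M y (y - u) - B M u (y - u)" by (rule B_diff)
      also have "B M y (y - u) = B M (y - u) y" by (rule B_sym)
      also have "\<dots> = B M y y - B M u y" by (rule B_diff)
      finally show ?thesis using Bu by simp
    qed
    moreover have "inner (y - u) (y - u) = inner y y - inner u y - inner u (y - u)"
      by (simp add: inner_diff inner_commute)
    moreover have "0 \<le> B M (y - u) (y - u)" using B_bound by blast
    ultimately have "inner y y - B M y y < e" using n by linarith
    moreover have "B M y y \<le> B 0 y y" by (rule B_le0[OF y])
    ultimately show ?thesis by simp
  qed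
  then have "inner y y - inner (Wa y) (Wa y) \<le> 0" by (rule field_le_epsilon)
  then have "y = W (Wa y)" by (intro Wa_ge_imp) simp
  then show ?thesis by (metis rangeI)
qed

end

end

theorem theorem15:
  fixes n :: nat
    and Jh :: "'h::{real_inner, complete_space} \<Rightarrow> 'h"
    and Ja :: "'a::{real_inner, complete_space} \<Rightarrow> 'a"
    and T :: "nat \<Rightarrow> 'h \<Rightarrow> 'h"
    and V :: "nat \<Rightarrow> 'a \<Rightarrow> 'a"
    and W :: "'h \<Rightarrow> 'a"
  assumes cJh: "cstruct Jh" and cJa: "cstruct Ja"
    \<comment> \<open>T is a spherical unitary on H\<close>
    and T_bdd: "\<forall>i\<in>{1..n}. cbounded Jh Jh (T i)"
    and T_comm: "\<forall>i\<in>{1..n}. \<forall>j\<in>{1..n}. T i \<circ> T j = T j \<circ> T i"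
    and T_normal: "\<forall>i\<in>{1..n}. T i \<circ> adj (T i) = adj (T i) \<circ> T i"
    and T_sph: "\<forall>x. (\<Sum>i=1..n. T i (adj (T i) x)) = x"
    \<comment> \<open>H is embedded in H~ by the complex-linear isometry W\<close>
    and W_bdd: "cbounded Jh Ja W"
    and W_isom: "\<forall>x. norm (W x) = norm x"
    \<comment> \<open>V~ is the minimal isometric dilation of T\<close>
    and V_bdd: "\<forall>i\<in>{1..n}. cbounded Ja Ja (V i)"
    and V_isom: "\<forall>i\<in>{1..n}. \<forall>x. norm (V i x) = norm x"
    and V_orth: "\<forall>i\<in>{1..n}. \<forall>j\<in>{1..n}. i \<noteq> j \<longrightarrow> (\<forall>x y. inner (V i x) (V j y) = 0)"
    and V_dil: "\<forall>i\<in>{1..n}. \<forall>h. adj (V i) (W h) = W (adj (T i) h)"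
    and V_min: "closure (span {opword V \<alpha> (W h) | \<alpha> h. set \<alpha> \<subseteq> {1..n}}) = UNIV"
  shows "max_comm_space Ja V n = range W
    \<and> (\<forall>i\<in>{1..n}. \<forall>h. oproj (range W) (V i (W h)) = W (T i h))"
proof -
  have Tbl: "\<And>i. i \<in> {1..n} \<Longrightarrow> bounded_linear (T i)" using T_bdd by (simp add: cbounded_def)
  have Vbl: "\<And>i. i \<in> {1..n} \<Longrightarrow> bounded_linear (V i)" using V_bdd by (simp add: cbounded_def)
  have Wbl: "bounded_linear W" using W_bdd by (simp add: cbounded_def)
  interpret d: dil n T V W
  proof (rule dil.intro)
    show "\<And>i. i \<in> {1..n} \<Longrightarrow> bounded_linear (T i)" by (rule Tbl)
    show "\<And>i j x. i \<in> {1..n} \<Longrightarrow> j \<in> {1..n} \<Longrightarrow> T i (T j x) = T j (T i x)"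
      using T_comm by (metis comp_apply)
    show "\<And>i x. i \<in> {1..n} \<Longrightarrow> T i (adj (T i) x) = adj (T i) (T i x)"
      using T_normal by (metis comp_apply)
    show "\<And>x. (\<Sum>i=1..n. T i (adj (T i) x)) = x" by (rule T_sph[rule_format])
    show "bounded_linear W" by (rule Wbl)
    show "\<And>x. norm (W x) = norm x" by (rule W_isom[rule_format])
    show "\<And>i. i \<in> {1..n} \<Longrightarrow> bounded_linear (V i)" by (rule Vbl)
    show "\<And>i x. i \<in> {1..n} \<Longrightarrow> norm (V i x) = norm x" using V_isom by blast
    show "\<And>i j x y. i \<in> {1..n} \<Longrightarrow> j \<in> {1..n} \<Longrightarrow> i \<noteq> j \<Longrightarrow> inner (V i x) (V j y) = 0"
      using V_orth by blast
    show "\<And>i h. i \<in> {1..n} \<Longrightarrow> adj (V i) (W h) = W (adj (T i) h)" using V_dil by blast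
    show "closure (span {opword V \<alpha> (W h) | \<alpha> h. set \<alpha> \<subseteq> {1..n}}) = UNIV" by (rule V_min)
  qed
  have Wlin: "linear W" using Wbl bounded_linear.linear by blast
  have sub: "subspace (range W)"
    unfolding subspace_def
  proof (intro conjI ballI allI)
    show "0 \<in> range W" using linear_0[OF Wlin] by (metis rangeI)
  next
    fix x y assume "x \<in> range W" "y \<in> range W"
    then obtain a b where "x = W a" "y = W b" by blast
    then have "x + y = W (a + b)" using linear_add[OF Wlin] by simp
    then show "x + y \<in> range W" by blast
  next
    fix c :: real and x assume "x \<in> range W"
    then obtain a where "x = W a" by blast
    then have "c *\<^sub>R x = W (c *\<^sub>R a)" using linear_scale[OF Wlin] by simp
    then show "c *\<^sub>R x \<in> range W" by blast
  qed
  have cl: "closed (range W)"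
  proof -
    have "complete (W ` UNIV)"
      by (rule complete_isometric_image[of 1]) (auto simp: Wbl W_isom complete_UNIV)
    then show ?thesis by (simp add: complete_eq_closed)
  qed
  have CI: "comm_inv Ja V n (range W)"
    unfolding comm_inv_def
  proof (intro conjI ballI sub cl)
    show "Ja ` range W \<subseteq> range W"
    proof
      fix x assume "x \<in> Ja ` range W"
      then obtain a where "x = Ja (W a)" by blast
      then have "x = W (Jh a)" using W_bdd by (simp add: cbounded_def)
      then show "x \<in> range W" by blast
    qed
  next
    fix i assume i: "i \<in> {1..n}"
    show "adj (V i) ` range W \<subseteq> range W"
    proof
      fix x assume "x \<in> adj (V i) ` range W"
      then obtain a where "x = adj (V i) (W a)" by blast
      then have "x = W (adj (T i) a)" using V_dil i by simp
      then show "x \<in> range W" by blast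
    qed
  next
    fix i j h assume i: "i \<in> {1..n}" and j: "j \<in> {1..n}" and h: "h \<in> range W"
    then obtain a where a: "h = W a" by blast
    have "adj (V i) (adj (V j) h) = W (adj (T i) (adj (T j) a))" using V_dil i j a by simp
    also have "\<dots> = W (adj (T j) (adj (T i) a))" using d.Ts_comm[OF i j] by simp
    also have "\<dots> = adj (V j) (adj (V i) h)" using V_dil i j a by simp
    finally show "adj (V i) (adj (V j) h) = adj (V j) (adj (V i) h)" .
  qed
  have MAX: "L \<subseteq> range W" if L: "comm_inv Ja V n L" for L
  proof
    fix y assume y: "y \<in> L"
    have LV: "\<And>i h. i \<in> {1..n} \<Longrightarrow> h \<in> L \<Longrightarrow> adj (V i) h \<in> L"
      using L unfolding comm_inv_def by blast
    have LC: "\<And>i j h. i \<in> {1..n} \<Longrightarrow> j \<in> {1..n} \<Longrightarrow> h \<in> L \<Longrightarrow> adj (V i) (adj (V j) h) = adj (V j) (adj (V i) h)"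
      using L unfolding comm_inv_def by blast
    show "y \<in> range W" by (rule d.L_sub[OF LV LC y])
  qed
  have part1: "max_comm_space Ja V n = range W"
    unfolding max_comm_space_def
    by (rule Greatest_equality) (use CI MAX in auto)
  have part2: "oproj (range W) (V i (W h)) = W (T i h)" if i: "i \<in> {1..n}" for i h
    unfolding oproj_def
  proof (rule the_equality)
    have "inner (V i (W h) - W (T i h)) m = 0" if "m \<in> range W" for m
    proof -
      from that obtain k where k: "m = W k" by blast
      have "inner (V i (W h)) (W k) = inner (W h) (adj (V i) (W k))" by (rule d.V_adj[OF i])
      also have "\<dots> = inner (W h) (W (adj (T i) k))" using V_dil i by simp
      also have "\<dots> = inner h (adj (T i) k)" by (rule d.W_inner)
      also have "\<dots> = inner (T i h) k" by (rule d.T_adj[OF i, symmetric])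
      also have "\<dots> = inner (W (T i h)) (W k)" by (rule d.W_inner[symmetric])
      finally show ?thesis using k by (simp add: inner_diff_left)
    qed
    then show "W (T i h) \<in> range W \<and> (\<forall>m\<in>range W. inner (V i (W h) - W (T i h)) m = 0)" by blast
  next
    fix p assume p: "p \<in> range W \<and> (\<forall>m\<in>range W. inner (V i (W h) - p) m = 0)"
    have q: "\<forall>m\<in>range W. inner (V i (W h) - W (T i h)) m = 0"
    proof
      fix m assume "m \<in> range W"
      then obtain k where k: "m = W k" by blast
      have "inner (V i (W h)) (W k) = inner (W h) (adj (V i) (W k))" by (rule d.V_adj[OF i])
      also have "\<dots> = inner (W h) (W (adj (T i) k))" using V_dil i by simp
      also have "\<dots> = inner h (adj (T i) k)" by (rule d.W_inner)
      also have "\<dots> = inner (T i h) k" by (rule d.T_adj[OF i, symmetric])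
      also have "\<dots> = inner (W (T i h)) (W k)" by (rule d.W_inner[symmetric])
      finally show "inner (V i (W h) - W (T i h)) m = 0" using k by (simp add: inner_diff_left)
    qed
    have mem: "W (T i h) - p \<in> range W"
      using p sub by (metis rangeI subspace_diff)
    have "inner (V i (W h) - p) (W (T i h) - p) - inner (V i (W h) - W (T i h)) (W (T i h) - p) = 0"
      using p q mem by (metis diff_self)
    then have "inner (W (T i h) - p) (W (T i h) - p) = 0"
      by (simp add: inner_diff_left)
    then show "p = W (T i h)" by simp
  qed
  show ?thesis using part1 part2 by blast
qed

end
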